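(* Let $h>0$, $n\in\mathbb{N}$, and let $\lambda:\mathbb{T}\to\mathbb{R}$ be an $n$-cycle with values $\lambda_0,\dots,\lambda_{n-1}\in\mathbb{R}\setminus\{\pm\tfrac1h\}$, such that $0<|e_{\lambda}(nh)|\neq1$ and $0<|e_{-\lambda}(nh)|\neq1$. Let $f:\mathbb{T}\to\mathbb{R}$ be arbitrary. Then the non-homogeneous equation $$\Delta_h^2 y(t)+\bigl[\Delta_h\lambda(t)-\lambda(t)\lambda(t+h)\bigr]y(t)=f(t),\qquad t\in\mathbb{T},$$ has Hyers–Ulam stability on $\mathbb{T}$ with Hyers–Ulam stability constant $L=K_0(\lambda)K_0(-\lambda)$.
   Context: Fix $h>0$ and let $\mathbb{T}=\{0,h,2h,3h,\dots\}$. For $x:\mathbb{T}\to\mathbb{R}$, $\Delta_h x(t)=\frac{x(t+h)-x(t)}{h}$ and $\Delta_h^2x=\Delta_h(\Delta_h x)$, $\Delta_h^3x=\Delta_h(\Delta_h^2 x)$. An $n$-cycle is a function $\mu:\mathbb{T}\to\mathbb{R}$ with $\mu(t)=\mu_k$ whenever $t/h\equiv k\pmod n$, $k\in\{0,\dots,n-1\}$, which has period $n$ and no smaller period. For such $\mu$ define the discrete exponential $e_\mu(t)=\prod_{k=0}^{t/h-1}(1+h\mu(kh))$ (empty product $=1$), so $e_\mu(nh)=\prod_{k=0}^{n-1}(1+h\mu_k)$. For $k\in\{0,\dots,n-1\}$ define $$S_k(\mu)=\sum_{j=1}^{n}\prod_{i=0}^{j-1}\frac{1}{|1+h\mu_{(k+i)\bmod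 n}|},$$ (e.g. $S_0(\mu)=\frac{1}{|1+h\mu_0|}+\frac{1}{|1+h\mu_0||1+h\mu_1|}+\dots+\frac{1}{|1+h\mu_0|\cdots|1+h\mu_{n-1}|}$), and, when $0<|e_\mu(nh)|\neq1$, $$K_0(\mu)=\frac{h|e_\mu(nh)|}{\bigl|1-|e_\mu(nh)|\bigr|}\max\{S_0(\mu),\dots,S_{n-1}(\mu)\}.$$ Here $-\lambda$ denotes the $n$-cycle with values $-\lambda_0,\dots,-\lambda_{n-1}$. Hyers–Ulam stability: an equation $\mathcal{L}[y](t)=f(t)$, $t\in\mathbb{T}$ (with $\mathcal{L}$ a linear difference operator) has Hyers–Ulam stability on $\mathbb{T}$ with Hyers–Ulam stability constant $K>0$ if for every $\varepsilon>0$ and every $\xi:\mathbb{T}\to\mathbb{R}$ with $|\mathcal{L}[\xi](t)-f(t)|\le\varepsilon$ for all $t\in\mathbb{T}$, there is a solution $y:\mathbb{T}\to\mathbb{R}$ of the equation with $|\xi(t)-y(t)|\le K\varepsilon$ for all $t\in\mathbb{T}$. The minimum Hyers–Ulam stability constant is the smallest such $K$. *)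

theory Defs
  imports "HOL-Analysis.Analysis"
begin

text \<open>A function x on T = {0,h,2h,...} is represented as a function on nat:
  x k stands for x(k h).\<close>

definition dlt :: "real \<Rightarrow> (nat \<Rightarrow> real) \<Rightarrow> nat \<Rightarrow> real" where
  "dlt h x k = (x (Suc k) - x k) / h"

definition is_cycle :: "nat \<Rightarrow> (nat \<Rightarrow> real) \<Rightarrow> bool" where
  "is_cycle n mu \<longleftrightarrow> n > 0 \<and> (\<forall>k. mu (k + n) = mu k) \<and>
     (\<forall>m. 0 < m \<and> m < n \<longrightarrow> \<not> (\<forall>k. mu (k + m) = mu k))"

text \<open>discrete exponential e_mu evaluated at time m h\<close>
definition dexp :: "real \<Rightarrow> (nat \<Rightarrow> real) \<Rightarrow> nat \<Rightarrow> real" where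
  "dexp h mu m = (\<Prod>k<m. (1 + h * mu k))"

definition Ssum :: "real \<Rightarrow> nat \<Rightarrow> (nat \<Rightarrow> real) \<Rightarrow> nat \<Rightarrow> real" where
  "Ssum h n mu k = (\<Sum>j=1..n. \<Prod>i<j. 1 / \<bar>1 + h * mu ((k + i) mod n)\<bar>)"

definition K0 :: "real \<Rightarrow> nat \<Rightarrow> (nat \<Rightarrow> real) \<Rightarrow> real" where
  "K0 h n mu = h * \<bar>dexp h mu n\<bar> / \<bar>1 - \<bar>dexp h mu n\<bar>\<bar> * Max {Ssum h n mu k | k. k < n}"

definition HU_stable :: "((nat \<Rightarrow> real) \<Rightarrow> nat \<Rightarrow> real) \<Rightarrow> (nat \<Rightarrow> real) \<Rightarrow> real \<Rightarrow> bool" where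
  "HU_stable L f K \<longleftrightarrow> K > 0 \<and>
     (\<forall>\<epsilon>>0. \<forall>\<xi>. (\<forall>t. \<bar>L \<xi> t - f t\<bar> \<le> \<epsilon>) \<longrightarrow>
        (\<exists>y. (\<forall>t. L y t = f t) \<and> (\<forall>t. \<bar>\<xi> t - y t\<bar> \<le> K * \<epsilon>)))"

end

theory Submission
  imports Defs
begin

lemma sum_split_add: "(\<Sum>j<m+k. f j) = (\<Sum>j<m. f j) + (\<Sum>j<k. f (m+j)) " for f :: "nat \<Rightarrow> real"
  by (induction k) (auto simp: add.assoc)

lemma prod_split_add: "(\<Prod>j<m+k. f j) = (\<Prod>j<m. f j) * (\<Prod>j<k. f (m+j)) " for f :: "nat \<Rightarrow> real"
  by (induction k) (auto simp: mult.assoc)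

lemma periodic_mod:
  fixes n k :: nat
  assumes "\<forall>k. g (k + n) = g k"
  shows "g (k mod n) = g k"
proof -
  have "g (r + m * n) = g r" for r m
  proof (induction m)
    case (Suc m)
    have "g (r + Suc m * n) = g ((r + m*n) + n)" by (simp add: algebra_simps)
    then show ?case using assms Suc by simp
  qed simp
  then show ?thesis by (metis div_mult_mod_eq add.commute)
qed

context
  fixes h E M \<epsilon> :: real and n :: nat and a q :: "nat \<Rightarrow> real"
  assumes hpos: "h > 0" and per: "\<forall>k. a (k + n) = a k" and anz: "\<forall>k. a k \<noteq> 0"
    and npos: "n > 0" and Edef: "E = \<bar>\<Prod>k<n. a k\<bar>" and E1: "E \<noteq> 1"
    and Mb: "\<forall>k. (\<Sum>j<n. \<Prod>i<Suc j. 1 / \<bar>a (k+i)\<bar>) \<le> M"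
    and qb: "\<forall>t. \<bar>q t\<bar> \<le> \<epsilon>"
begin

definition "Phi t = (\<Prod>k<t. a k)"
definition "D = (\<Prod>k<n. a k)"

lemma Phi_nz: "Phi t \<noteq> 0"
  using anz by (simp add: Phi_def)

lemma Phi_add: "Phi (t + m) = Phi t * (\<Prod>i<m. a (t+i))"
  unfolding Phi_def by (rule prod_split_add)

lemma Phi_Suc: "Phi (Suc t) = Phi t * a t"
  unfolding Phi_def by simp

lemma block: "(\<Prod>i<n. a (t+i)) = D"
proof (induction t)
  case 0 then show ?case by (simp add: D_def)
next
  case (Suc t)
  have "Phi (Suc t + n) = Phi (Suc t) * (\<Prod>i<n. a (Suc t+i))" by (rule Phi_add)
  moreover have "Phi (Suc t + n) = Phi (t + n) * a (t + n)"
    by (metis Phi_Suc add_Suc)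
  moreover have "Phi (t+n) = Phi t * D" using Phi_add[of t n] Suc by simp
  moreover have "a (t+n) = a t" using per by simp
  ultimately have "Phi t * a t * (\<Prod>i<n. a (Suc t+i)) = Phi t * D * a t"
    using Phi_Suc[of t] by (metis mult.commute)
  then show ?case using Phi_nz[of t] anz[rule_format, of t] by (metis (no_types, lifting) mult.commute mult.left_commute mult_cancel_left)
qed

lemma Phi_n: "Phi (t + n) = Phi t * D"
  using Phi_add[of t n] block by simp

lemma Dabs: "\<bar>D\<bar> = E" using Edef D_def by simp

lemma Epos: "E > 0" using Dabs anz D_def by auto

definition "W t = (\<Sum>j<n. \<bar>Phi t / Phi (t + j + 1)\<bar>)"

lemma W_le: "W t \<le> M"
proof -
  have "\<bar>Phi t / Phi (t + j + 1)\<bar> = (\<Prod>i<Suc j. 1 / \<bar>a (t+i)\<bar>)" for j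
    using Phi_add[of t "Suc j"] Phi_nz[of t]
    by (simp add: abs_prod prod_dividef del: prod.lessThan_Suc)
  then show ?thesis using Mb unfolding W_def by simp
qed

lemma W_nonneg: "W t \<ge> 0" unfolding W_def by (simp add: sum_nonneg)

lemma recur: "(\<lambda>t. h * Phi t * ((\<Sum>j<t. q j / Phi (Suc j)) - c)) (Suc t)
   = a t * (\<lambda>t. h * Phi t * ((\<Sum>j<t. q j / Phi (Suc j)) - c)) t + h * q t"
  using Phi_nz[of t] anz by (simp add: Phi_Suc field_simps)

lemma eps_nonneg: "\<epsilon> \<ge> 0" using qb by (meson abs_ge_zero order_trans)

lemma sub_sum: fixes g :: "nat \<Rightarrow> real" assumes "\<And>l. g l \<ge> 0" "m + t \<le> n"
  shows "(\<Sum>j<t. g (m+j)) \<le> (\<Sum>l<n. g l)"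
proof -
  have "(\<Sum>j<t. g (m+j)) \<le> (\<Sum>l<m+t. g l)"
    using sum_split_add[where m=m and k=t and f=g] assms(1) by (simp add: sum_nonneg)
  also have "\<dots> \<le> (\<Sum>l<n. g l)"
    by (rule sum_mono2) (use assms in auto)
  finally show ?thesis .
qed

definition "V t = (\<Sum>j<t. \<bar>Phi t / Phi (Suc j)\<bar>)"

lemma V_step: "V (t+n) = E * V t + E * W t"
proof -
  have "V (t+n) = (\<Sum>j<t. \<bar>Phi (t+n) / Phi (Suc j)\<bar>) + (\<Sum>l<n. \<bar>Phi (t+n) / Phi (Suc (t+l))\<bar>)"
    unfolding V_def by (rule sum_split_add)
  also have "\<dots> = E * V t + E * W t"
    unfolding V_def W_def Phi_n sum_distrib_left
    by (simp add: abs_mult Dabs[symmetric] mult.commute)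
  finally show ?thesis .
qed

lemma V_small: assumes "t \<le> n" shows "V t \<le> E * W t"
proof -
  let ?g = "\<lambda>l. \<bar>Phi (t+n) / Phi (t + l + 1)\<bar>"
  have "E * W t = (\<Sum>l<n. ?g l)"
    unfolding W_def Phi_n sum_distrib_left
    by (simp add: abs_mult Dabs[symmetric] mult.commute)
  moreover have "(\<Sum>j<t. ?g (n - t + j)) \<le> (\<Sum>l<n. ?g l)"
    by (rule sub_sum) (use assms in auto)
  moreover have "?g (n - t + j) = \<bar>Phi t / Phi (Suc j)\<bar>" for j
  proof -
    have e: "t + (n - t + j) + 1 = Suc j + n" using assms by simp
    have "?g (n - t + j) = \<bar>Phi t * D / (Phi (Suc j) * D)\<bar>"
      unfolding e Phi_n by simp
    then show ?thesis using Dabs Epos by (simp add: abs_mult)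
  qed
  ultimately show ?thesis unfolding V_def by simp
qed

lemma V_bound: assumes "E < 1" shows "V t \<le> E * M / (1 - E)"
proof (induction t rule: less_induct)
  case (less t)
  show ?case
  proof (cases "t \<le> n")
    case True
    have "V t \<le> E * M" using V_small[OF True] W_le[of t] Epos
      by (meson mult_left_mono less_imp_le order_trans)
    also have "E * M \<le> E * M / (1 - E)"
    proof -
      have "E * M \<ge> 0" using Epos W_le[of 0] W_nonneg[of 0] by simp
      then show ?thesis using assms Epos by (simp add: divide_simps mult_left_le)
    qed
    finally show ?thesis .
  next
    case False
    then obtain s where s: "t = s + n" by (metis add.commute le_add_diff_inverse less_imp_le not_le)
    have "s < t" using s npos by simp
    then have IH: "V s \<le> E * M / (1 - E)" by (rule less)
    have "V t = E * V s + E * W s" using s V_step by simp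
    also have "\<dots> \<le> E * (E * M / (1 - E)) + E * M"
      using IH W_le[of s] Epos by (intro add_mono mult_left_mono) auto
    also have "\<dots> = E * M / (1 - E)" using assms by (simp add: field_simps)
    finally show ?thesis .
  qed
qed

lemma case_small: assumes "E < 1"
  shows "\<exists>w. (\<forall>t. w (Suc t) = a t * w t + h * q t) \<and> (\<forall>t. \<bar>w t\<bar> \<le> h * E / \<bar>1 - E\<bar> * M * \<epsilon>)"
proof (intro exI conjI allI)
  let ?w = "\<lambda>t. h * Phi t * ((\<Sum>j<t. q j / Phi (Suc j)) - 0)"
  fix t
  show "?w (Suc t) = a t * ?w t + h * q t" by (rule recur)
  have "\<bar>Phi t * (\<Sum>j<t. q j / Phi (Suc j))\<bar> = \<bar>\<Sum>j<t. Phi t / Phi (Suc j) * q j\<bar>"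
    by (simp add: sum_distrib_left)
  also have "\<dots> \<le> (\<Sum>j<t. \<bar>Phi t / Phi (Suc j) * q j\<bar>)" by (rule sum_abs)
  also have "\<dots> \<le> (\<Sum>j<t. \<bar>Phi t / Phi (Suc j)\<bar> * \<epsilon>)"
  proof (rule sum_mono)
    fix j
    have "\<bar>Phi t / Phi (Suc j) * q j\<bar> = \<bar>Phi t / Phi (Suc j)\<bar> * \<bar>q j\<bar>" by (rule abs_mult)
    also have "\<dots> \<le> \<bar>Phi t / Phi (Suc j)\<bar> * \<epsilon>" using qb by (intro mult_left_mono) auto
    finally show "\<bar>Phi t / Phi (Suc j) * q j\<bar> \<le> \<bar>Phi t / Phi (Suc j)\<bar> * \<epsilon>" .
  qed
  also have "\<dots> = V t * \<epsilon>" by (simp add: V_def sum_distrib_right)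
  also have "\<dots> \<le> E * M / (1 - E) * \<epsilon>" using V_bound[OF assms] eps_nonneg by (intro mult_right_mono) auto
  finally have "\<bar>Phi t * (\<Sum>j<t. q j / Phi (Suc j))\<bar> \<le> E * M / (1 - E) * \<epsilon>" .
  then have "h * \<bar>Phi t * (\<Sum>j<t. q j / Phi (Suc j))\<bar> \<le> h * (E * M / (1 - E) * \<epsilon>)"
    using hpos by (intro mult_left_mono) auto
  then show "\<bar>?w t\<bar> \<le> h * E / \<bar>1 - E\<bar> * M * \<epsilon>" using assms hpos
    by (simp add: abs_mult mult.assoc)
qed

definition "U t j = \<bar>Phi t / Phi (t + j + 1)\<bar>"

lemma U_n: "U t (n + j) = U t j / E"
proof -
  have e: "t + (n + j) + 1 = (t + j + 1) + n" by simp
  show ?thesis unfolding U_def e Phi_n using Dabs Epos by (simp add: abs_mult)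
qed

lemma U_nonneg: "U t j \<ge> 0" by (simp add: U_def)

lemma G_block: assumes "E > 1" shows "(\<Sum>j<N*n. U t j) \<le> M * E / (E - 1)"
proof (induction N)
  case 0
  have "M \<ge> 0" using W_le[of 0] W_nonneg[of 0] by simp
  then show ?case using assms by simp
next
  case (Suc N)
  have "(\<Sum>j<Suc N * n. U t j) = (\<Sum>j<n. U t j) + (\<Sum>j<N*n. U t (n+j))"
    using sum_split_add[where m=n and k="N*n" and f="U t"] by simp
  also have "\<dots> = W t + (\<Sum>j<N*n. U t j) / E"
  proof -
    have "W t = (\<Sum>j<n. U t j)" by (simp add: W_def U_def)
    then show ?thesis by (simp add: U_n sum_divide_distrib)
  qed
  also have "\<dots> \<le> M + (M * E / (E - 1)) / E"
    using W_le[of t] Suc Epos by (intro add_mono divide_right_mono) auto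
  also have "\<dots> = M * E / (E - 1)" using assms by (simp add: field_simps)
  finally show ?case .
qed

lemma G_all: assumes "E > 1" shows "(\<Sum>j<N. U t j) \<le> M * E / (E - 1)"
proof -
  have "(\<Sum>j<N. U t j) \<le> (\<Sum>j<N*n. U t j)"
    by (rule sum_mono2) (use npos U_nonneg in auto)
  then show ?thesis using G_block[OF assms] by (meson order_trans)
qed

lemma U_summable: assumes "E > 1" shows "summable (U t)"
  by (rule summableI_nonneg_bounded[where x="M * E / (E - 1)"]) (use U_nonneg G_all[OF assms] in auto)

lemma U_suminf: assumes "E > 1" shows "suminf (U t) \<le> M * E / (E - 1)"
  by (rule suminf_le_const) (use U_summable[OF assms] G_all[OF assms] in auto)

lemma case_big: assumes "E > 1"
  shows "\<exists>w. (\<forall>t. w (Suc t) = a t * w t + h * q t) \<and> (\<forall>t. \<bar>w t\<bar> \<le> h * E / \<bar>1 - E\<bar> * M * \<epsilon>)"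
proof -
  define u where "u j = q j / Phi (Suc j)" for j
  have Phi0: "Phi 0 = 1" by (simp add: Phi_def)
  have su: "summable u"
  proof (rule summable_comparison_test)
    show "summable (\<lambda>j. \<epsilon> * U 0 j)" using U_summable[OF assms] by (rule summable_mult)
    show "\<exists>N. \<forall>j\<ge>N. norm (u j) \<le> \<epsilon> * U 0 j"
    proof (intro exI allI impI)
      fix j
      have "norm (u j) = \<bar>q j\<bar> * U 0 j" by (simp add: u_def U_def Phi0)
      also have "\<dots> \<le> \<epsilon> * U 0 j" using qb U_nonneg by (intro mult_right_mono) auto
      finally show "norm (u j) \<le> \<epsilon> * U 0 j" .
    qed
  qed
  define c where "c = suminf u"
  show ?thesis
  proof (intro exI conjI allI)
    let ?w = "\<lambda>t. h * Phi t * ((\<Sum>j<t. q j / Phi (Suc j)) - c)"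
    fix t
    show "?w (Suc t) = a t * ?w t + h * q t" by (rule recur)
    have sh: "summable (\<lambda>j. u (j + t))" using su by (simp add: summable_iff_shift)
    have "c = (\<Sum>j. u (j + t)) + (\<Sum>j<t. u j)"
      unfolding c_def by (rule suminf_split_initial_segment[OF su])
    then have "(\<Sum>j<t. q j / Phi (Suc j)) - c = - (\<Sum>j. u (j + t))" by (simp add: u_def)
    then have "\<bar>Phi t * ((\<Sum>j<t. q j / Phi (Suc j)) - c)\<bar> = \<bar>\<Sum>j. Phi t * u (j + t)\<bar>"
      using suminf_mult[OF sh, of "Phi t"] by simp
    also have "\<dots> \<le> (\<Sum>j. \<epsilon> * U t j)"
    proof -
      have "norm (\<Sum>j. Phi t * u (j + t)) \<le> (\<Sum>j. \<epsilon> * U t j)"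
      proof (rule norm_suminf_le)
      fix j
      have "\<bar>Phi t * u (j + t)\<bar> = U t j * \<bar>q (j + t)\<bar>"
        by (simp add: u_def U_def abs_mult add.commute)
      also have "\<dots> \<le> U t j * \<epsilon>" using qb U_nonneg by (intro mult_left_mono) auto
      finally have "\<bar>Phi t * u (j + t)\<bar> \<le> \<epsilon> * U t j" by (simp add: mult.commute)
      then show "norm (Phi t * u (j + t)) \<le> \<epsilon> * U t j" by simp
      show "summable (\<lambda>j. \<epsilon> * U t j)" using U_summable[OF assms] by (rule summable_mult)
      qed
      then show ?thesis by simp
    qed
    also have "\<dots> = \<epsilon> * suminf (U t)" using U_summable[OF assms] by (rule suminf_mult)
    also have "\<dots> \<le> \<epsilon> * (M * E / (E - 1))" using U_suminf[OF assms] eps_nonneg by (intro mult_left_mono) auto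
    finally have b: "\<bar>Phi t * ((\<Sum>j<t. q j / Phi (Suc j)) - c)\<bar> \<le> \<epsilon> * (M * E / (E - 1))" .
    have "\<bar>?w t\<bar> = h * \<bar>Phi t * ((\<Sum>j<t. q j / Phi (Suc j)) - c)\<bar>" using hpos by (simp add: abs_mult mult.assoc)
    also have "\<dots> \<le> h * (\<epsilon> * (M * E / (E - 1)))" using b hpos by (intro mult_left_mono) auto
    also have "\<dots> = h * E / \<bar>1 - E\<bar> * M * \<epsilon>" using assms by (simp add: abs_if field_simps)
    finally show "\<bar>?w t\<bar> \<le> h * E / \<bar>1 - E\<bar> * M * \<epsilon>" .
  qed
qed

lemma first_order:
  "\<exists>w. (\<forall>t. w (Suc t) = a t * w t + h * q t) \<and> (\<forall>t. \<bar>w t\<bar> \<le> h * E / \<bar>1 - E\<bar> * M * \<epsilon>)"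
  using case_small case_big E1 by (cases "E < 1") auto

end

lemma Ssum_eq:
  fixes mu :: "nat \<Rightarrow> real"
  assumes per: "\<forall>k. mu (k + n) = mu k"
  shows "Ssum h n mu (k mod n) = (\<Sum>j<n. \<Prod>i<Suc j. 1 / \<bar>1 + h * mu (k + i)\<bar>)"
proof -
  have m: "mu ((k mod n + i) mod n) = mu (k + i)" for i
    by (simp add: mod_add_left_eq periodic_mod[OF per])
  show ?thesis unfolding Ssum_def m
    by (simp add: sum.atLeast1_atMost_eq)
qed

lemma Ssum_le_Max:
  assumes "k < n" shows "Ssum h n mu k \<le> Max {Ssum h n mu k | k. k < n}"
  by (rule Max_ge) (use assms in auto)

lemma prod_shift_per:
  fixes g :: "nat \<Rightarrow> real"
  assumes "g n = g 0" "g 0 \<noteq> 0"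
  shows "(\<Prod>k<n. g (Suc k)) = (\<Prod>k<n. g k)"
proof -
  have "g 0 * (\<Prod>k<n. g (Suc k)) = (\<Prod>k<Suc n. g k)" by (rule prod.lessThan_Suc_shift[symmetric])
  also have "\<dots> = (\<Prod>k<n. g k) * g 0" using assms by simp
  finally show ?thesis using assms by simp
qed

lemma nz_lemma: "h > 0 \<Longrightarrow> x \<noteq> - (1 / h) \<Longrightarrow> 1 + h * x \<noteq> (0::real)"
  by (auto simp: field_simps)

lemma L_factor:
  fixes h :: real and lam x :: "nat \<Rightarrow> real"
  assumes "h \<noteq> 0"
  shows "dlt h (dlt h x) t + (dlt h lam t - lam t * lam (Suc t)) * x t
     = dlt h (\<lambda>t. dlt h x t + lam t * x t) t - lam (Suc t) * (dlt h x t + lam t * x t)"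
  using assms by (simp add: dlt_def field_simps)


theorem theorem3p4:
  fixes h :: real and n :: nat and lam f :: "nat \<Rightarrow> real"
  assumes "h > 0"
    and "is_cycle n lam"
    and "\<forall>k. lam k \<noteq> 1 / h \<and> lam k \<noteq> - (1 / h)"
    and "0 < \<bar>dexp h lam n\<bar>" and "\<bar>dexp h lam n\<bar> \<noteq> 1"
    and "0 < \<bar>dexp h (\<lambda>k. - lam k) n\<bar>" and "\<bar>dexp h (\<lambda>k. - lam k) n\<bar> \<noteq> 1"
  shows "HU_stable
           (\<lambda>y t. dlt h (dlt h y) t + (dlt h lam t - lam t * lam (Suc t)) * y t) f
           (K0 h n lam * K0 h n (\<lambda>k. - lam k))"
proof -
  note hpos = assms(1)
  have npos: "n > 0" and per: "\<forall>k. lam (k + n) = lam k" using assms(2) by (auto simp: is_cycle_def)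
  have nz1: "1 + h * lam k \<noteq> 0" for k using nz_lemma[OF hpos] assms(3) by blast
  have nz2: "1 + h * (- lam k) \<noteq> 0" for k using nz_lemma[OF hpos, of "- lam k"] assms(3) by auto
  have perm: "\<forall>k. - lam (k + n) = - lam k" using per by simp
  define M1 where "M1 = Max {Ssum h n lam k | k. k < n}"
  define M2 where "M2 = Max {Ssum h n (\<lambda>k. - lam k) k | k. k < n}"
  define E1 where "E1 = \<bar>dexp h lam n\<bar>"
  define E2 where "E2 = \<bar>dexp h (\<lambda>k. - lam k) n\<bar>"
  have K1: "K0 h n lam = h * E1 / \<bar>1 - E1\<bar> * M1" by (simp add: K0_def E1_def M1_def)
  have K2: "K0 h n (\<lambda>k. - lam k) = h * E2 / \<bar>1 - E2\<bar> * M2" by (simp add: K0_def E2_def M2_def)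
  have posS: "Ssum h n mu 0 > 0" if "\<forall>k. 1 + h * mu k \<noteq> 0" for mu
    unfolding Ssum_def using npos that
    by (intro sum_pos prod_pos) auto
  have M1pos: "M1 > 0" using posS[of lam] nz1 Ssum_le_Max[OF npos, where h=h and mu=lam] unfolding M1_def by fastforce
  have M2pos: "M2 > 0" using posS[of "\<lambda>k. - lam k"] nz2 Ssum_le_Max[OF npos, where h=h and mu="\<lambda>k. - lam k"] unfolding M2_def by fastforce
  have K1pos: "K0 h n lam > 0" unfolding K1 using M1pos hpos assms(4,5) E1_def by simp
  have K2pos: "K0 h n (\<lambda>k. - lam k) > 0" unfolding K2 using M2pos hpos assms(6,7) E2_def by simp
  let ?a1 = "\<lambda>k. 1 + h * lam (Suc k)"
  let ?a2 = "\<lambda>k. 1 + h * (- lam k)"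
  have per1: "\<forall>k. ?a1 (k + n) = ?a1 k" using per by (metis add_Suc)
  have per2: "\<forall>k. ?a2 (k + n) = ?a2 k" using per by simp
  have E1def: "E1 = \<bar>\<Prod>k<n. ?a1 k\<bar>"
    unfolding E1_def dexp_def
    using prod_shift_per[where n=n and g="\<lambda>k. 1 + h * lam k"] per[rule_format, of 0] nz1 by simp
  have E2def: "E2 = \<bar>\<Prod>k<n. ?a2 k\<bar>" unfolding E2_def dexp_def by simp
  have Mb1: "\<forall>k. (\<Sum>j<n. \<Prod>i<Suc j. 1 / \<bar>?a1 (k+i)\<bar>) \<le> M1"
  proof
    fix k
    have "(\<Sum>j<n. \<Prod>i<Suc j. 1 / \<bar>?a1 (k+i)\<bar>) = Ssum h n lam (Suc k mod n)"
      using Ssum_eq[OF per, where h=h and k="Suc k"] by simp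
    also have "\<dots> \<le> M1" unfolding M1_def using npos by (intro Ssum_le_Max) simp
    finally show "(\<Sum>j<n. \<Prod>i<Suc j. 1 / \<bar>?a1 (k+i)\<bar>) \<le> M1" .
  qed
  have Mb2: "\<forall>k. (\<Sum>j<n. \<Prod>i<Suc j. 1 / \<bar>?a2 (k+i)\<bar>) \<le> M2"
  proof
    fix k
    have "(\<Sum>j<n. \<Prod>i<Suc j. 1 / \<bar>?a2 (k+i)\<bar>) = Ssum h n (\<lambda>k. - lam k) (k mod n)"
      using Ssum_eq[OF perm, where h=h and k=k] by simp
    also have "\<dots> \<le> M2" unfolding M2_def using npos by (intro Ssum_le_Max) simp
    finally show "(\<Sum>j<n. \<Prod>i<Suc j. 1 / \<bar>?a2 (k+i)\<bar>) \<le> M2" .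
  qed
  show ?thesis
    unfolding HU_stable_def
  proof (intro conjI allI impI)
    show "K0 h n lam * K0 h n (\<lambda>k. - lam k) > 0" using K1pos K2pos by simp
    fix \<epsilon> :: real and \<xi> :: "nat \<Rightarrow> real"
    assume "\<epsilon> > 0"
    assume hyp: "\<forall>t. \<bar>dlt h (dlt h \<xi>) t + (dlt h lam t - lam t * lam (Suc t)) * \<xi> t - f t\<bar> \<le> \<epsilon>"
    define \<eta> where "\<eta> t = dlt h \<xi> t + lam t * \<xi> t" for t
    define q1 where "q1 t = dlt h (dlt h \<xi>) t + (dlt h lam t - lam t * lam (Suc t)) * \<xi> t - f t" for t
    have q1b: "\<forall>t. \<bar>q1 t\<bar> \<le> \<epsilon>" using hyp q1_def by simp
    obtain w1 where w1r: "\<forall>t. w1 (Suc t) = ?a1 t * w1 t + h * q1 t"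
      and w1b: "\<forall>t. \<bar>w1 t\<bar> \<le> h * E1 / \<bar>1 - E1\<bar> * M1 * \<epsilon>"
      using first_order[where h=h and n=n and a="?a1" and E=E1 and M=M1 and q=q1 and \<epsilon>=\<epsilon>,
          OF hpos per1 _ npos E1def _ Mb1 q1b] nz1 assms(5) E1_def by auto
    obtain w2 where w2r: "\<forall>t. w2 (Suc t) = ?a2 t * w2 t + h * w1 t"
      and w2b: "\<forall>t. \<bar>w2 t\<bar> \<le> h * E2 / \<bar>1 - E2\<bar> * M2 * (K0 h n lam * \<epsilon>)"
      using first_order[where h=h and n=n and a="?a2" and E=E2 and M=M2 and q=w1 and \<epsilon>="K0 h n lam * \<epsilon>",
          OF hpos per2 _ npos E2def _ Mb2] nz2 assms(7) E2_def w1b K1 by (auto simp: mult.assoc)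
    define z where "z t = \<eta> t - w1 t" for t
    define y where "y t = \<xi> t - w2 t" for t
    have hz: "h \<noteq> 0" using hpos by simp
    have zeq: "dlt h z t - lam (Suc t) * z t = f t" for t
    proof -
      have "q1 t = dlt h \<eta> t - lam (Suc t) * \<eta> t - f t"
        unfolding q1_def \<eta>_def using L_factor[OF hz, where x=\<xi> and lam=lam and t=t] by simp
      then show ?thesis using w1r[rule_format, of t] hz
        by (simp add: z_def dlt_def field_simps)
    qed
    have yeq: "dlt h y t + lam t * y t = z t" for t
      using w2r[rule_format, of t] hz
      by (simp add: y_def z_def \<eta>_def dlt_def field_simps)
    show "\<exists>y. (\<forall>t. dlt h (dlt h y) t + (dlt h lam t - lam t * lam (Suc t)) * y t = f t) \<and>
           (\<forall>t. \<bar>\<xi> t - y t\<bar> \<le> K0 h n lam * K0 h n (\<lambda>k. - lam k) * \<epsilon>)"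
    proof (intro exI conjI allI)
      fix t
      have e: "(\<lambda>t. dlt h y t + lam t * y t) = z" using yeq by auto
      show "dlt h (dlt h y) t + (dlt h lam t - lam t * lam (Suc t)) * y t = f t"
        using L_factor[OF hz, where x=y and lam=lam and t=t] yeq[of t] zeq[of t] unfolding e by simp
      show "\<bar>\<xi> t - y t\<bar> \<le> K0 h n lam * K0 h n (\<lambda>k. - lam k) * \<epsilon>"
        using w2b[rule_format, of t] unfolding y_def K2[symmetric] by (simp add: ac_simps)
    qed
  qed
qed

end
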